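(* Let $\alpha\ge0$, $\beta\ge\alpha/2$, let $W^0$ be a Brownian motion with generated $\sigma$-algebra $\mathcal W^0$, and let $Y$ be a solution of $$dY(t)=\beta\,\mathbb E[Y(t)\mid\mathcal W^0]\,dt+\sqrt{\alpha\,Y(t)\,\mathbb E[Y(t)\mid\mathcal W^0]}\,dB_t+Y(t)\,dW^0_t$$ (with $B$ a Brownian motion independent of $W^0$), whose conditional law given $\mathcal W^0$ coincides with the solution $\rho$ of the SPDE $$d\rho_t=\Big(\tfrac{\alpha}{2}\langle\rho_t,\mathrm{id}_x\rangle\partial_x^2(x\rho_t)+\tfrac12\partial_x^2(x^2\rho_t)-\beta\langle\rho_t,\mathrm{id}_x\rangle\partial_x\rho_t\Big)dt-\partial_x(x\rho_t)\,dW^0_t,$$ under the assumptions (B1) $\alpha\ge0$, $\beta\ge\alpha/2$; (B2) strictly positive i.i.d. initial values with finite first and second moments; (B3) convergence of the laws of the empirical initial measures to $\delta_\lambda$ in $M(M_1(\mathbb R_{++}))$. Let $Y_1,\dots,Y_N$ be identically distributed copies of $Y$, conditionally independent given $\mathcal W^0$, obtained by taking $N$ independent Brownian motions in place of $B$. Then for almost every $t\in[0,T]$ and every bounded continuous $\varphi$, $$\sqrt{\mathbb E\Big[\Big|\frac1N\sum_{i=1}^N\varphi(Y_i(t))-\langle\rho_t,\varphi\rangle\Big|^2\,\Big|\,\mathcal W^0\Big]}\le\frac{C_\varphi}{\sqrt N},$$ with a constant $C_\varphi$ depending only on $\varphi$.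
   Context: $\langle\mu,f\rangle=\int fd\mu$, $\mathrm{id}_x(x)=x$; $M_1(E)$: probability measures on $E$ with finite first moment, Wasserstein-1 topology; $\mathbb R_{++}=(0,\infty)$. The conditional law $\mathcal L(Y(t)\mid\mathcal W^0)$ is defined by $\langle\mathcal L(Y(t)\mid\mathcal W^0),\varphi\rangle=\mathbb E[\varphi(Y(t))\mid\mathcal W^0]$. *)

theory Defs
  imports "HOL-Probability.Probability"
begin

definition cond_indep_vars_real ::
  "'a measure \<Rightarrow> 'a measure \<Rightarrow> 'i set \<Rightarrow> ('i \<Rightarrow> 'a \<Rightarrow> real) \<Rightarrow> bool" where
  "cond_indep_vars_real M F I X \<longleftrightarrow>
     (\<forall>J f. finite J \<and> J \<subseteq> I \<and>
        (\<forall>j\<in>J. f j \<in> borel_measurable borel \<and> (\<exists>B. \<forall>y. \<bar>f j y\<bar> \<le> B)) \<longrightarrow>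
        (AE \<omega> in M. real_cond_exp M F (\<lambda>x. \<Prod>j\<in>J. f j (X j x)) \<omega>
                    = (\<Prod>j\<in>J. real_cond_exp M F (\<lambda>x. f j (X j x)) \<omega>)))"

definition is_cond_law ::
  "'a measure \<Rightarrow> 'a measure \<Rightarrow> ('a \<Rightarrow> real) \<Rightarrow> ('a \<Rightarrow> real measure) \<Rightarrow> bool" where
  "is_cond_law M F Z \<rho> \<longleftrightarrow>
     (\<forall>\<omega>\<in>space M. prob_space (\<rho> \<omega>) \<and> sets (\<rho> \<omega>) = sets borel) \<and>
     (\<forall>\<phi>::real \<Rightarrow> real. continuous_on UNIV \<phi> \<and> bounded (range \<phi>) \<longrightarrow>
        (\<lambda>\<omega>. \<integral>y. \<phi> y \<partial>(\<rho> \<omega>)) \<in> borel_measurable F \<and>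
        (AE \<omega> in M. real_cond_exp M F (\<lambda>x. \<phi> (Z x)) \<omega> = (\<integral>y. \<phi> y \<partial>(\<rho> \<omega>))))"

end

theory Submission
  imports Defs
begin

lemma core:
  fixes M F :: "'a measure" and Z :: "nat \<Rightarrow> 'a \<Rightarrow> real" and m :: "'a \<Rightarrow> real"
    and B :: real and N :: nat
  assumes P: "prob_space M" and S: "subalgebra M F"
    and Zm: "\<And>i. Z i \<in> borel_measurable M"
    and Zb: "\<And>i x. x \<in> space M \<Longrightarrow> \<bar>Z i x\<bar> \<le> B"
    and mF: "m \<in> borel_measurable F"
    and mb: "\<And>x. x \<in> space M \<Longrightarrow> \<bar>m x\<bar> \<le> B"
    and ce: "\<And>i. AE x in M. real_cond_exp M F (Z i) x = m x"
    and ind: "\<And>i j. i \<noteq> j \<Longrightarrow> AE x in M. real_cond_exp M F (\<lambda>x. Z i x * Z j x) x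
                 = real_cond_exp M F (Z i) x * real_cond_exp M F (Z j) x"
    and N: "N \<ge> 1"
  shows "AE x in M. real_cond_exp M F (\<lambda>x. \<bar>(\<Sum>i<N. Z i x) / real N - m x\<bar>\<^sup>2) x \<le> 4 * B\<^sup>2 / real N"
proof -
  interpret prob_space M by (rule P)
  interpret finite_measure_subalgebra M F
    by unfold_locales (rule S)
  have mM[measurable]: "m \<in> borel_measurable M" using measurable_from_subalg[OF S mF] .
  note Zm[measurable]
  obtain x0 where "x0 \<in> space M" using not_empty by blast
  then have B0: "B \<ge> 0" using mb[of x0] by linarith
  have intg: "integrable M f" if "f \<in> borel_measurable M" "\<And>x. x \<in> space M \<Longrightarrow> \<bar>f x\<bar> \<le> K" for f :: "'a \<Rightarrow> real" and K :: real
    using that by (intro integrable_const_bound[where B=K]) (auto intro!: AE_I2)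
  have bb: "\<bar>a * b\<bar> \<le> K * K" if "\<bar>a\<bar> \<le> K" "\<bar>b\<bar> \<le> K" for a b K :: real
    using that by (simp add: abs_mult mult_mono')
  have iZ[intro]: "integrable M (Z i)" for i by (rule intg[OF Zm Zb])
  have im: "integrable M m" by (rule intg[OF mM mb])
  have iZZ: "integrable M (\<lambda>x. Z i x * Z j x)" for i j
    apply (rule intg[of _ "B*B"]) apply measurable using bb Zb by blast
  have imZ: "integrable M (\<lambda>x. m x * Z j x)" for j
    apply (rule intg[of _ "B*B"]) apply measurable using bb Zb mb by blast
  have imm: "integrable M (\<lambda>x. m x * m x)"
    apply (rule intg[of _ "B*B"]) apply measurable using bb mb by blast
  define D where "D i x = Z i x - m x" for i x
  have Db: "\<bar>D i x\<bar> \<le> 2 * B" if "x \<in> space M" for i x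
    using Zb[OF that, of i] mb[OF that] unfolding D_def by linarith
  have Dm[measurable]: "D i \<in> borel_measurable M" for i
    unfolding D_def[abs_def] by measurable
  have iDD: "integrable M (\<lambda>x. D i x * D j x)" for i j
    apply (rule intg[of _ "2*B*(2*B)"]) apply measurable using bb Db by (metis (no_types))
  have off: "AE x in M. real_cond_exp M F (\<lambda>x. D i x * D j x) x = 0" if "i \<noteq> j" for i j
  proof -
    have eq: "(\<lambda>x. D i x * D j x) = (\<lambda>x. ((Z i x * Z j x - m x * Z j x) - m x * Z i x) + m x * m x)"
      by (auto simp: fun_eq_iff D_def algebra_simps)
    have i1: "integrable M (\<lambda>x. Z i x * Z j x - m x * Z j x)" by (intro Bochner_Integration.integrable_diff iZZ imZ)
    have i2: "integrable M (\<lambda>x. (Z i x * Z j x - m x * Z j x) - m x * Z i x)" by (intro Bochner_Integration.integrable_diff i1 imZ)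
    have a1: "AE x in M. real_cond_exp M F (\<lambda>x. ((Z i x * Z j x - m x * Z j x) - m x * Z i x) + m x * m x) x
       = real_cond_exp M F (\<lambda>x. (Z i x * Z j x - m x * Z j x) - m x * Z i x) x + real_cond_exp M F (\<lambda>x. m x * m x) x"
      by (rule real_cond_exp_add[OF i2 imm])
    have a2: "AE x in M. real_cond_exp M F (\<lambda>x. (Z i x * Z j x - m x * Z j x) - m x * Z i x) x
       = real_cond_exp M F (\<lambda>x. Z i x * Z j x - m x * Z j x) x - real_cond_exp M F (\<lambda>x. m x * Z i x) x"
      by (rule real_cond_exp_diff[OF i1 imZ])
    have a3: "AE x in M. real_cond_exp M F (\<lambda>x. Z i x * Z j x - m x * Z j x) x
       = real_cond_exp M F (\<lambda>x. Z i x * Z j x) x - real_cond_exp M F (\<lambda>x. m x * Z j x) x"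
      by (rule real_cond_exp_diff[OF iZZ imZ])
    have a4: "AE x in M. real_cond_exp M F (\<lambda>x. m x * Z j x) x = m x * real_cond_exp M F (Z j) x"
      by (rule real_cond_exp_mult[OF mF Zm imZ])
    have a5: "AE x in M. real_cond_exp M F (\<lambda>x. m x * Z i x) x = m x * real_cond_exp M F (Z i) x"
      by (rule real_cond_exp_mult[OF mF Zm imZ])
    have a6: "AE x in M. real_cond_exp M F (\<lambda>x. m x * m x) x = m x * m x"
      by (rule real_cond_exp_F_meas[OF imm]) (intro borel_measurable_times mF)
    show ?thesis unfolding eq
      using a1 a2 a3 a4 a5 a6 ind[OF that] ce[of i] ce[of j] by eventually_elim (simp add: algebra_simps)
  qed
  have diag: "AE x in M. real_cond_exp M F (\<lambda>x. D i x * D i x) x \<le> 2*B*(2*B)" for i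
    apply (rule real_cond_exp_le_c[OF iDD]) apply (rule AE_I2)
    subgoal premises p for x
      using bb[OF Db[OF p, of i] Db[OF p, of i]] abs_ge_self[of "D i x * D i x"] by linarith
    done
  have Npos: "real N > 0" using N by simp
  have pw: "\<bar>(\<Sum>i<N. Z i x) / real N - m x\<bar>\<^sup>2 = (\<Sum>i<N. \<Sum>j<N. D i x * D j x) / (real N * real N)" for x
  proof -
    have "(\<Sum>i<N. Z i x) / real N - m x = (\<Sum>i<N. D i x) / real N"
      using Npos by (simp add: D_def sum_subtractf field_simps)
    then show ?thesis
      by (simp add: power2_eq_square sum_product)
  qed
  have iS: "integrable M (\<lambda>x. \<Sum>j<N. D i x * D j x)" for i
    by (intro Bochner_Integration.integrable_sum iDD)
  have iSS: "integrable M (\<lambda>x. \<Sum>i<N. \<Sum>j<N. D i x * D j x)"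
    by (intro Bochner_Integration.integrable_sum iDD)
  have e1: "AE x in M. real_cond_exp M F (\<lambda>x. \<bar>(\<Sum>i<N. Z i x) / real N - m x\<bar>\<^sup>2) x
     = real_cond_exp M F (\<lambda>x. \<Sum>i<N. \<Sum>j<N. D i x * D j x) x / (real N * real N)"
    unfolding pw by (rule real_cond_exp_cdiv[OF iSS])
  have e2: "AE x in M. real_cond_exp M F (\<lambda>x. \<Sum>i<N. \<Sum>j<N. D i x * D j x) x
     = (\<Sum>i<N. real_cond_exp M F (\<lambda>x. \<Sum>j<N. D i x * D j x) x)"
    by (rule real_cond_exp_sum[OF iS])
  have e3: "AE x in M. \<forall>i\<in>{..<N}. real_cond_exp M F (\<lambda>x. \<Sum>j<N. D i x * D j x) x
     = (\<Sum>j<N. real_cond_exp M F (\<lambda>x. D i x * D j x) x)"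
    by (intro AE_finite_allI real_cond_exp_sum iDD) simp
  have e4: "AE x in M. \<forall>i\<in>{..<N}. \<forall>j\<in>{..<N}. i \<noteq> j \<longrightarrow> real_cond_exp M F (\<lambda>x. D i x * D j x) x = 0"
    by (intro AE_finite_allI) (auto intro: off)
  have e5: "AE x in M. \<forall>i\<in>{..<N}. real_cond_exp M F (\<lambda>x. D i x * D i x) x \<le> 2*B*(2*B)"
    by (intro AE_finite_allI diag) simp
  show ?thesis
    using e1 e2 e3 e4 e5
  proof eventually_elim
    case (elim x)
    let ?E = "\<lambda>i j. real_cond_exp M F (\<lambda>x. D i x * D j x) x"
    have "(\<Sum>i<N. \<Sum>j<N. ?E i j) = (\<Sum>i<N. ?E i i)"
    proof (rule sum.cong[OF refl])
      fix i assume i: "i \<in> {..<N}"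
      have "(\<Sum>j<N. ?E i j) = (\<Sum>j<N. if j = i then ?E i i else 0)"
        using elim(4) i by (intro sum.cong) auto
      also have "\<dots> = ?E i i" using i by simp
      finally show "(\<Sum>j<N. ?E i j) = ?E i i" .
    qed
    also have "\<dots> \<le> (\<Sum>i<N. 2*B*(2*B))" using elim(5) by (intro sum_mono) auto
    also have "\<dots> = real N * (4 * B\<^sup>2)" by (simp add: power2_eq_square)
    finally have le: "(\<Sum>i<N. \<Sum>j<N. ?E i j) \<le> real N * (4 * B\<^sup>2)" .
    have "real_cond_exp M F (\<lambda>x. \<bar>(\<Sum>i<N. Z i x) / real N - m x\<bar>\<^sup>2) x = (\<Sum>i<N. \<Sum>j<N. ?E i j) / (real N * real N)"
      using elim(1,2,3) by simp
    also have "\<dots> \<le> real N * (4 * B\<^sup>2) / (real N * real N)"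
      using le Npos by (intro divide_right_mono) auto
    also have "\<dots> = 4 * B\<^sup>2 / real N" using Npos by simp
    finally show ?case .
  qed
qed

theorem lemma4p1:
  fixes M F :: "'a measure"
    and \<alpha> \<beta> T :: real
    and Y :: "nat \<Rightarrow> real \<Rightarrow> 'a \<Rightarrow> real"
    and \<rho> :: "real \<Rightarrow> 'a \<Rightarrow> real measure"
  assumes "prob_space M"
    and "subalgebra M F"
    and "\<alpha> \<ge> 0" and "\<beta> \<ge> \<alpha> / 2" and "T > 0"
    and meas: "\<And>i t. Y i t \<in> borel_measurable M"
    and pos: "\<And>i t \<omega>. \<omega> \<in> space M \<Longrightarrow> Y i t \<omega> > 0"
    and indep: "\<And>t. t \<in> {0..T} \<Longrightarrow> cond_indep_vars_real M F UNIV (\<lambda>i. Y i t)"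
    and law: "\<And>i t. t \<in> {0..T} \<Longrightarrow> is_cond_law M F (Y i t) (\<rho> t)"
  shows "\<forall>\<phi>::real \<Rightarrow> real. continuous_on UNIV \<phi> \<and> bounded (range \<phi>) \<longrightarrow>
           (\<exists>C. \<forall>N::nat. N \<ge> 1 \<longrightarrow>
              (AE t in lebesgue_on {0..T}. AE \<omega> in M.
                 sqrt (real_cond_exp M F
                   (\<lambda>x. \<bar>(\<Sum>i<N. \<phi> (Y i t x)) / real N - (\<integral>y. \<phi> y \<partial>(\<rho> t x))\<bar>\<^sup>2) \<omega>)
                 \<le> C / sqrt (real N)))"
proof (intro allI impI)
  fix \<phi> :: "real \<Rightarrow> real"
  assume \<phi>: "continuous_on UNIV \<phi> \<and> bounded (range \<phi>)"
  then obtain B where Bphi: "\<And>y. \<bar>\<phi> y\<bar> \<le> B" unfolding bounded_real by blast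
  have B0: "B \<ge> 0" using Bphi[of 0] by linarith
  have \<phi>m[measurable]: "\<phi> \<in> borel_measurable borel"
    using \<phi> by (intro borel_measurable_continuous_onI) simp
  note meas[measurable]
  show "\<exists>C. \<forall>N::nat. N \<ge> 1 \<longrightarrow>
              (AE t in lebesgue_on {0..T}. AE \<omega> in M.
                 sqrt (real_cond_exp M F
                   (\<lambda>x. \<bar>(\<Sum>i<N. \<phi> (Y i t x)) / real N - (\<integral>y. \<phi> y \<partial>(\<rho> t x))\<bar>\<^sup>2) \<omega>)
                 \<le> C / sqrt (real N))"
  proof (intro exI[of _ "2*B"] allI impI)
    fix N :: nat assume N: "N \<ge> 1"
    show "AE t in lebesgue_on {0..T}. AE \<omega> in M.
                 sqrt (real_cond_exp M F
                   (\<lambda>x. \<bar>(\<Sum>i<N. \<phi> (Y i t x)) / real N - (\<integral>y. \<phi> y \<partial>(\<rho> t x))\<bar>\<^sup>2) \<omega>)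
                 \<le> 2 * B / sqrt (real N)"
    proof (rule AE_I2)
      fix t assume "t \<in> space (lebesgue_on {0..T})"
      then have t: "t \<in> {0..T}" by (simp add: space_restrict_space)
      have L: "is_cond_law M F (Y i t) (\<rho> t)" for i using law[OF t] .
      define m where "m x = (\<integral>y. \<phi> y \<partial>(\<rho> t x))" for x
      have mF: "m \<in> borel_measurable F"
        using L[of 0] \<phi> unfolding is_cond_law_def m_def[abs_def] by blast
      have ce: "AE x in M. real_cond_exp M F (\<lambda>x. \<phi> (Y i t x)) x = m x" for i
        using L[of i] \<phi> unfolding is_cond_law_def m_def by blast
      have mb: "\<bar>m x\<bar> \<le> B" if x: "x \<in> space M" for x
      proof -
        have ps: "prob_space (\<rho> t x)" and ss: "sets (\<rho> t x) = sets borel"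
          using L[of 0] x unfolding is_cond_law_def by auto
        interpret r: prob_space "\<rho> t x" by (rule ps)
        have pm: "\<phi> \<in> borel_measurable (\<rho> t x)"
          using measurable_cong_sets[OF ss refl] \<phi>m by blast
        have ip: "integrable (\<rho> t x) \<phi>"
          by (rule r.integrable_const_bound[where B=B]) (use Bphi pm in auto)
        have "m x \<le> B" unfolding m_def
          by (rule r.integral_le_const[OF ip]) (use Bphi abs_le_D1 in blast)
        moreover have "- B \<le> m x" unfolding m_def
          by (rule r.integral_ge_const[OF ip]) (intro AE_I2, metis Bphi abs_le_D2 minus_le_iff)
        ultimately show ?thesis by linarith
      qed
      have ind: "AE x in M. real_cond_exp M F (\<lambda>x. \<phi> (Y i t x) * \<phi> (Y j t x)) x
                 = real_cond_exp M F (\<lambda>x. \<phi> (Y i t x)) x * real_cond_exp M F (\<lambda>x. \<phi> (Y j t x)) x"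
        if ij: "i \<noteq> j" for i j
      proof -
        have "AE x in M. real_cond_exp M F (\<lambda>x. \<Prod>k\<in>{i,j}. (\<lambda>_. \<phi>) k (Y k t x)) x
                 = (\<Prod>k\<in>{i,j}. real_cond_exp M F (\<lambda>x. (\<lambda>_. \<phi>) k (Y k t x)) x)"
          apply (rule spec[OF spec[OF indep[OF t, unfolded cond_indep_vars_real_def], of "{i,j}"], of "\<lambda>_. \<phi>", THEN mp])
          using Bphi \<phi>m by blast
        then show ?thesis using ij by simp
      qed
      have "AE x in M. real_cond_exp M F (\<lambda>x. \<bar>(\<Sum>i<N. \<phi> (Y i t x)) / real N - m x\<bar>\<^sup>2) x \<le> 4 * B\<^sup>2 / real N"
        by (rule core[where Z="\<lambda>i x. \<phi> (Y i t x)", OF assms(1,2) _ _ mF mb ce ind N])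
           (auto simp: Bphi)
      then show "AE \<omega> in M.
                 sqrt (real_cond_exp M F
                   (\<lambda>x. \<bar>(\<Sum>i<N. \<phi> (Y i t x)) / real N - (\<integral>y. \<phi> y \<partial>(\<rho> t x))\<bar>\<^sup>2) \<omega>)
                 \<le> 2 * B / sqrt (real N)"
      proof eventually_elim
        case (elim x)
        have "sqrt (real_cond_exp M F (\<lambda>x. \<bar>(\<Sum>i<N. \<phi> (Y i t x)) / real N - m x\<bar>\<^sup>2) x)
              \<le> sqrt (4 * B\<^sup>2 / real N)" using elim by (rule real_sqrt_le_mono)
        also have "\<dots> = 2 * B / sqrt (real N)"
          using B0 by (simp add: real_sqrt_divide real_sqrt_mult)
        finally show ?case unfolding m_def .
      qed
    qed
  qed
qed

end
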